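(* Let $X$ take values in $\{x_1,\dots,x_K\}$ and $Y$ in $\{y_1,\dots,y_K\}$ with a fixed joint distribution $p(X,Y)$, and let $Y_N\in\{1,\dots,N\}$ be a quantization of $Y$ given by a conditional probability $q_{\nu k}=q(Y_N=\nu\mid Y=y_k)$, $q\in\Delta$. Fix $I_0>0$. Then any solution $q^*$ of the problem $$\max_{q\in\Delta} -I(Y;Y_N)\quad\text{subject to}\quad I(X;Y_N)\ge I_0,$$ and any solution $q^*$ of the problem $$\max_{q\in\Delta} H(Y_N\mid Y)\quad\text{subject to}\quad I(X;Y_N)\ge I_0,$$ satisfies the constraint with equality: $I(X;Y_N)=I_0$ at $q=q^*$.
   Context: $\Delta$ is the set of all $q=(q_{\nu k})_{\nu\le N,\,k\le K}$ with $q_{\nu k}\ge 0$ and $\sum_{\nu=1}^N q_{\nu k}=1$ for each $k$. The quantizer induces the joint distributions $p(Y_N=\nu, Y=y_k)=q_{\nu k}p(y_k)$ and $p(X=x, Y_N=\nu)=\sum_k q_{\nu k}p(x,y_k)$ (i.e. $X\to Y\to Y_N$ is Markov). $I(\cdot;\cdot)$ denotes mutual information and $H(Y_N\mid Y)=-\sum_k p(y_k)\sum_\nu q_{\nu k}\log q_{\nu k}$ the conditional entropy; all are regarded as functions of $q$. *)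

theory Defs
  imports Complex_Main
begin

text \<open>Indices: X and Y take values x_1..x_K and y_1..y_K, encoded by i, k in {1..K};
  the quantizer output Y_N takes values nu in {1..N}.
  p i k = p(X = x_i, Y = y_k);  q nu k = q(Y_N = nu | Y = y_k).\<close>

definition xlog :: "real \<Rightarrow> real \<Rightarrow> real" where
  "xlog a b = (if a = 0 then 0 else a * ln (a / b))"

definition Delta :: "nat \<Rightarrow> nat \<Rightarrow> (nat \<Rightarrow> nat \<Rightarrow> real) set" where
  "Delta N K = {q. (\<forall>\<nu>\<in>{1..N}. \<forall>k\<in>{1..K}. q \<nu> k \<ge> 0) \<and>
                   (\<forall>k\<in>{1..K}. (\<Sum>\<nu>=1..N. q \<nu> k) = 1)}"

definition is_joint_dist :: "nat \<Rightarrow> (nat \<Rightarrow> nat \<Rightarrow> real) \<Rightarrow> bool" where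
  "is_joint_dist K p \<longleftrightarrow> (\<forall>i\<in>{1..K}. \<forall>k\<in>{1..K}. p i k \<ge> 0) \<and>
                           (\<Sum>i=1..K. \<Sum>k=1..K. p i k) = 1"

definition pX :: "nat \<Rightarrow> (nat \<Rightarrow> nat \<Rightarrow> real) \<Rightarrow> nat \<Rightarrow> real" where
  "pX K p i = (\<Sum>k=1..K. p i k)"

definition pY :: "nat \<Rightarrow> (nat \<Rightarrow> nat \<Rightarrow> real) \<Rightarrow> nat \<Rightarrow> real" where
  "pY K p k = (\<Sum>i=1..K. p i k)"

definition pYN :: "nat \<Rightarrow> (nat \<Rightarrow> nat \<Rightarrow> real) \<Rightarrow> (nat \<Rightarrow> nat \<Rightarrow> real) \<Rightarrow> nat \<Rightarrow> real" where
  "pYN K p q \<nu> = (\<Sum>k=1..K. q \<nu> k * pY K p k)"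

definition pXYN :: "nat \<Rightarrow> (nat \<Rightarrow> nat \<Rightarrow> real) \<Rightarrow> (nat \<Rightarrow> nat \<Rightarrow> real) \<Rightarrow> nat \<Rightarrow> nat \<Rightarrow> real" where
  "pXYN K p q i \<nu> = (\<Sum>k=1..K. q \<nu> k * p i k)"

definition MI_X_YN :: "nat \<Rightarrow> nat \<Rightarrow> (nat \<Rightarrow> nat \<Rightarrow> real) \<Rightarrow> (nat \<Rightarrow> nat \<Rightarrow> real) \<Rightarrow> real" where
  "MI_X_YN N K p q = (\<Sum>i=1..K. \<Sum>\<nu>=1..N.
       xlog (pXYN K p q i \<nu>) (pX K p i * pYN K p q \<nu>))"

text \<open>I(Y;Y_N), with p(Y_N = nu, Y = y_k) = q nu k p(y_k)\<close>
definition MI_Y_YN :: "nat \<Rightarrow> nat \<Rightarrow> (nat \<Rightarrow> nat \<Rightarrow> real) \<Rightarrow> (nat \<Rightarrow> nat \<Rightarrow> real) \<Rightarrow> real" where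
  "MI_Y_YN N K p q = (\<Sum>k=1..K. \<Sum>\<nu>=1..N.
       xlog (q \<nu> k * pY K p k) (pY K p k * pYN K p q \<nu>))"

definition CondH_YN_Y :: "nat \<Rightarrow> nat \<Rightarrow> (nat \<Rightarrow> nat \<Rightarrow> real) \<Rightarrow> (nat \<Rightarrow> nat \<Rightarrow> real) \<Rightarrow> real" where
  "CondH_YN_Y N K p q = - (\<Sum>k=1..K. pY K p k * (\<Sum>\<nu>=1..N. xlog (q \<nu> k) 1))"

definition is_solution ::
  "nat \<Rightarrow> nat \<Rightarrow> (nat \<Rightarrow> nat \<Rightarrow> real) \<Rightarrow> real \<Rightarrow> ((nat \<Rightarrow> nat \<Rightarrow> real) \<Rightarrow> real)
     \<Rightarrow> (nat \<Rightarrow> nat \<Rightarrow> real) \<Rightarrow> bool" where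
  "is_solution N K p I0 f qs \<longleftrightarrow>
     qs \<in> Delta N K \<and> MI_X_YN N K p qs \<ge> I0 \<and>
     (\<forall>q\<in>Delta N K. MI_X_YN N K p q \<ge> I0 \<longrightarrow> f q \<le> f qs)"

end

theory Submission imports Defs "HOL-Real_Asymp.Real_Asymp" begin

lemma xlog_scale:
  assumes "c \<ge> 0"
  shows "xlog (c * a) (c * b) = c * xlog a b"
proof (cases "c = 0 \<or> a = 0")
  case True then show ?thesis by (auto simp: xlog_def)
next
  case False
  then have "c * a / (c * b) = a / b" by simp
  with False show ?thesis by (simp add: xlog_def)
qed

lemma xlog_self: "xlog a a = 0"
  by (simp add: xlog_def)

lemma xlog_core:
  fixes a b a' b' :: real
  assumes "a \<ge> 0" "b \<ge> 0" "a' \<ge> 0" "b' \<ge> 0"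
    and "a > 0 \<Longrightarrow> b > 0" and "a' > 0 \<Longrightarrow> b' > 0"
  shows "xlog (a + a') (b + b') \<le> xlog a b + xlog a' b'"
proof (cases "a = 0")
  case True
  show ?thesis
  proof (cases "a' = 0")
    case True with \<open>a = 0\<close> show ?thesis by (simp add: xlog_def)
  next
    case False
    then have "a' > 0" "b' > 0" using assms by auto
    have "ln (a' / (b + b')) \<le> ln (a' / b')"
      using \<open>a' > 0\<close> \<open>b' > 0\<close> assms(2) by (intro ln_mono) (auto intro!: divide_left_mono)
    then have "a' * ln (a' / (b + b')) \<le> a' * ln (a' / b')"
      using \<open>a' > 0\<close> by (intro mult_left_mono) auto
    then show ?thesis using True False by (simp add: xlog_def)
  qed
next
  case False
  then have a: "a > 0" "b > 0" using assms by auto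
  show ?thesis
  proof (cases "a' = 0")
    case True
    have "ln (a / (b + b')) \<le> ln (a / b)"
      using a assms(4) by (intro ln_mono) (auto intro!: divide_left_mono)
    then have "a * ln (a / (b + b')) \<le> a * ln (a / b)"
      using a by (intro mult_left_mono) auto
    then show ?thesis using True False by (simp add: xlog_def)
  next
    case False
    then have a': "a' > 0" "b' > 0" using assms by auto
    define S where "S = a + a'"
    define T where "T = b + b'"
    have ST: "S > 0" "T > 0" using a a' by (auto simp: S_def T_def)
    have 1: "ln (b * S / (a * T)) \<le> b * S / (a * T) - 1"
      using a ST by (intro ln_le_minus_one) auto
    have 2: "ln (b' * S / (a' * T)) \<le> b' * S / (a' * T) - 1"
      using a' ST by (intro ln_le_minus_one) auto
    have e1: "ln (b * S / (a * T)) = ln (S / T) - ln (a / b)"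
      using a ST by (simp add: ln_div ln_mult)
    have e2: "ln (b' * S / (a' * T)) = ln (S / T) - ln (a' / b')"
      using a' ST by (simp add: ln_div ln_mult)
    have "a * (ln (S / T) - ln (a / b)) \<le> a * (b * S / (a * T) - 1)"
      using 1 e1 a by (intro mult_left_mono) auto
    moreover have "a' * (ln (S / T) - ln (a' / b')) \<le> a' * (b' * S / (a' * T) - 1)"
      using 2 e2 a' by (intro mult_left_mono) auto
    moreover have "a * (b * S / (a * T) - 1) + a' * (b' * S / (a' * T) - 1) = 0"
    proof -
      have "a * (b * S / (a * T) - 1) = b * S / T - a" using a ST by (simp add: field_simps)
      moreover have "a' * (b' * S / (a' * T) - 1) = b' * S / T - a'" using a' ST by (simp add: field_simps)
      moreover have "b * S / T + b' * S / T = S" using ST by (simp add: T_def add_divide_distrib[symmetric] distrib_right[symmetric])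
      ultimately show ?thesis by (simp add: S_def)
    qed
    ultimately have "S * ln (S / T) \<le> a * ln (a / b) + a' * ln (a' / b')"
      by (simp add: algebra_simps S_def)
    then show ?thesis using a a' ST by (simp add: xlog_def S_def T_def)
  qed
qed

lemma xlog_sum:
  fixes a b :: "nat \<Rightarrow> real"
  assumes "finite S" "\<And>k. k \<in> S \<Longrightarrow> a k \<ge> 0" "\<And>k. k \<in> S \<Longrightarrow> b k \<ge> 0"
    "\<And>k. k \<in> S \<Longrightarrow> a k > 0 \<Longrightarrow> b k > 0"
  shows "xlog (\<Sum>k\<in>S. a k) (\<Sum>k\<in>S. b k) \<le> (\<Sum>k\<in>S. xlog (a k) (b k))"
  using assms
proof (induction S rule: finite_induct)
  case empty then show ?case by (simp add: xlog_def)
next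
  case (insert x F)
  have "xlog (\<Sum>k\<in>insert x F. a k) (\<Sum>k\<in>insert x F. b k)
      = xlog (a x + (\<Sum>k\<in>F. a k)) (b x + (\<Sum>k\<in>F. b k))" using insert by simp
  also have "\<dots> \<le> xlog (a x) (b x) + xlog (\<Sum>k\<in>F. a k) (\<Sum>k\<in>F. b k)"
  proof (rule xlog_core)
    show "(\<Sum>k\<in>F. a k) > 0 \<Longrightarrow> (\<Sum>k\<in>F. b k) > 0"
    proof -
      assume "(\<Sum>k\<in>F. a k) > 0"
      then obtain k where "k \<in> F" "a k \<noteq> 0" by (metis less_irrefl sum.neutral)
      then have "b k > 0" using insert.prems by (metis insertCI less_eq_real_def)
      moreover have "b k \<le> (\<Sum>k\<in>F. b k)" using \<open>k \<in> F\<close> insert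
        by (intro member_le_sum) auto
      ultimately show ?thesis by simp
    qed
  qed (use insert.prems in \<open>auto intro: sum_nonneg\<close>)
  also have "\<dots> \<le> xlog (a x) (b x) + (\<Sum>k\<in>F. xlog (a k) (b k))"
    using insert by auto
  finally show ?case using insert by simp
qed

lemma xlog_convex:
  fixes a b a' b' t :: real
  assumes "a \<ge> 0" "b \<ge> 0" "a' \<ge> 0" "b' \<ge> 0"
    and "a > 0 \<Longrightarrow> b > 0" and "a' > 0 \<Longrightarrow> b' > 0" and "0 \<le> t" "t \<le> 1"
  shows "xlog ((1-t)*a + t*a') ((1-t)*b + t*b') \<le> (1-t) * xlog a b + t * xlog a' b'"
proof -
  have "xlog ((1-t)*a + t*a') ((1-t)*b + t*b') \<le> xlog ((1-t)*a) ((1-t)*b) + xlog (t*a') (t*b')"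
    using assms by (intro xlog_core) (auto simp: zero_less_mult_iff)
  also have "\<dots> = (1-t) * xlog a b + t * xlog a' b'"
    using assms by (simp add: xlog_scale)
  finally show ?thesis .
qed


lemma tlnt: "((\<lambda>t::real. t * ln t) \<longlongrightarrow> 0) (at_right 0)"
  by real_asymp

lemma xlog_cont:
  fixes a b a' b' :: real
  assumes "a \<ge> 0" "b \<ge> 0" "a' \<ge> 0" "b' \<ge> 0"
    and "a > 0 \<Longrightarrow> b > 0" and "a' > 0 \<Longrightarrow> b' > 0"
  shows "((\<lambda>t. xlog ((1-t)*a + t*a') ((1-t)*b + t*b')) \<longlongrightarrow> xlog a b) (at_right 0)"
proof -
  have ev: "eventually (\<lambda>t. t \<in> {0<..<1::real}) (at_right 0)"
    by (rule eventually_at_right_real) auto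
  show ?thesis
  proof (cases "a > 0")
    case True
    then have b: "b > 0" using assms by auto
    let ?h = "\<lambda>t. ((1-t)*a + t*a') * ln (((1-t)*a + t*a') / ((1-t)*b + t*b'))"
    have "(?h \<longlongrightarrow> ((1-0)*a + 0*a') * ln (((1-0)*a + 0*a') / ((1-0)*b + 0*b'))) (at_right 0)"
      using True b by (intro tendsto_intros) auto
    then have "(?h \<longlongrightarrow> xlog a b) (at_right 0)" using True by (simp add: xlog_def)
    moreover have "eventually (\<lambda>t. ?h t = xlog ((1-t)*a + t*a') ((1-t)*b + t*b')) (at_right 0)"
      using ev
    proof eventually_elim
      case (elim t)
      then have "(1-t)*a + t*a' > 0" using True assms
        by (intro add_pos_nonneg) auto
      then show ?case by (simp add: xlog_def)
    qed
    ultimately show ?thesis by (rule Lim_transform_eventually)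
  next
    case False
    then have a0: "a = 0" using assms by auto
    show ?thesis
    proof (cases "a' > 0")
      case False
      then have "a' = 0" using assms by auto
      then show ?thesis using a0 by (simp add: xlog_def)
    next
      case True
      then have b': "b' > 0" using assms by auto
      show ?thesis
      proof (cases "b > 0")
        case False
        then have b0: "b = 0" using assms by auto
        have "((\<lambda>t. t * xlog a' b') \<longlongrightarrow> 0 * xlog a' b') (at_right 0)"
          by (intro tendsto_intros)
        moreover have "eventually (\<lambda>t. t * xlog a' b' = xlog ((1-t)*a + t*a') ((1-t)*b + t*b')) (at_right 0)"
          using ev by eventually_elim (simp add: a0 b0 xlog_scale)
        ultimately show ?thesis using a0 by (simp add: xlog_def Lim_transform_eventually)
      next
        case True
        have l1: "((\<lambda>t. a' * (t * ln t) + a' * ln a' * t) \<longlongrightarrow> a' * 0 + a' * ln a' * 0) (at_right 0)"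
          by (intro tendsto_intros tlnt)
        have l2: "((\<lambda>t. (t * a') * ln ((1-t)*b + t*b')) \<longlongrightarrow> (0 * a') * ln ((1-0)*b + 0*b')) (at_right 0)"
          using True by (intro tendsto_intros) auto
        have l: "((\<lambda>t. (a' * (t * ln t) + a' * ln a' * t) - (t * a') * ln ((1-t)*b + t*b')) \<longlongrightarrow> 0) (at_right 0)"
          using tendsto_diff[OF l1 l2] by simp
        have "eventually (\<lambda>t. (a' * (t * ln t) + a' * ln a' * t) - (t * a') * ln ((1-t)*b + t*b')
             = xlog ((1-t)*a + t*a') ((1-t)*b + t*b')) (at_right 0)"
          using ev
        proof eventually_elim
          case (elim t)
          have B: "(1-t)*b + t*b' > 0" using elim True b' by (intro add_pos_nonneg) auto
          have "xlog ((1-t)*a + t*a') ((1-t)*b + t*b') = t*a' * ln (t*a' / ((1-t)*b + t*b'))"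
            using elim \<open>a' > 0\<close> a0 by (simp add: xlog_def)
          also have "\<dots> = t*a' * (ln t + ln a' - ln ((1-t)*b + t*b'))"
            using elim \<open>a' > 0\<close> B by (simp add: ln_div ln_mult)
          finally show ?case by (simp add: algebra_simps)
        qed
        from Lim_transform_eventually[OF l this] show ?thesis using a0 by (simp add: xlog_def)
      qed
    qed
  qed
qed


lemma jd_nonneg: "is_joint_dist K p \<Longrightarrow> i \<in> {1..K} \<Longrightarrow> k \<in> {1..K} \<Longrightarrow> p i k \<ge> 0"
  by (simp add: is_joint_dist_def)

lemma Delta_nonneg: "q \<in> Delta N K \<Longrightarrow> \<nu> \<in> {1..N} \<Longrightarrow> k \<in> {1..K} \<Longrightarrow> q \<nu> k \<ge> 0"
  by (simp add: Delta_def)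

lemma Delta_sum: "q \<in> Delta N K \<Longrightarrow> k \<in> {1..K} \<Longrightarrow> (\<Sum>\<nu>=1..N. q \<nu> k) = 1"
  by (simp add: Delta_def)

lemma pY_nonneg: "is_joint_dist K p \<Longrightarrow> k \<in> {1..K} \<Longrightarrow> pY K p k \<ge> 0"
  unfolding pY_def by (intro sum_nonneg) (auto simp: jd_nonneg)

lemma pX_nonneg: "is_joint_dist K p \<Longrightarrow> i \<in> {1..K} \<Longrightarrow> pX K p i \<ge> 0"
  unfolding pX_def by (intro sum_nonneg) (auto simp: jd_nonneg)

lemma pY_sum: "is_joint_dist K p \<Longrightarrow> (\<Sum>k=1..K. pY K p k) = 1"
  unfolding pY_def is_joint_dist_def using sum.swap[of "\<lambda>i k. p i k" "{1..K}" "{1..K}"] by simp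

lemma pYN_nonneg: "is_joint_dist K p \<Longrightarrow> q \<in> Delta N K \<Longrightarrow> \<nu> \<in> {1..N} \<Longrightarrow> pYN K p q \<nu> \<ge> 0"
  unfolding pYN_def by (intro sum_nonneg mult_nonneg_nonneg) (auto simp: Delta_nonneg pY_nonneg)

lemma pYN_ge: "is_joint_dist K p \<Longrightarrow> q \<in> Delta N K \<Longrightarrow> \<nu> \<in> {1..N} \<Longrightarrow> k \<in> {1..K}
   \<Longrightarrow> q \<nu> k * pY K p k \<le> pYN K p q \<nu>"
  unfolding pYN_def
  by (rule member_le_sum[where f="\<lambda>k. q \<nu> k * pY K p k"])
     (auto intro!: mult_nonneg_nonneg simp: Delta_nonneg pY_nonneg)

lemma pY_ge: "is_joint_dist K p \<Longrightarrow> i \<in> {1..K} \<Longrightarrow> k \<in> {1..K} \<Longrightarrow> p i k \<le> pY K p k"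
  unfolding pY_def by (rule member_le_sum[where f="\<lambda>i. p i k"]) (auto simp: jd_nonneg)

lemma pX_ge: "is_joint_dist K p \<Longrightarrow> i \<in> {1..K} \<Longrightarrow> k \<in> {1..K} \<Longrightarrow> p i k \<le> pX K p i"
  unfolding pX_def by (rule member_le_sum[where f="\<lambda>k. p i k"]) (auto simp: jd_nonneg)

lemma pYN_pos: "is_joint_dist K p \<Longrightarrow> q \<in> Delta N K \<Longrightarrow> \<nu> \<in> {1..N} \<Longrightarrow> k \<in> {1..K}
   \<Longrightarrow> q \<nu> k > 0 \<Longrightarrow> pY K p k > 0 \<Longrightarrow> pYN K p q \<nu> > 0"
  using pYN_ge[of K p q N \<nu> k] by (smt (verit) mult_pos_pos)

lemma pXYN_nonneg: "is_joint_dist K p \<Longrightarrow> q \<in> Delta N K \<Longrightarrow> \<nu> \<in> {1..N} \<Longrightarrow> i \<in> {1..K}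
   \<Longrightarrow> pXYN K p q i \<nu> \<ge> 0"
  unfolding pXYN_def by (intro sum_nonneg mult_nonneg_nonneg) (auto simp: Delta_nonneg jd_nonneg)

lemma pXYN_pos: "is_joint_dist K p \<Longrightarrow> q \<in> Delta N K \<Longrightarrow> \<nu> \<in> {1..N} \<Longrightarrow> i \<in> {1..K}
   \<Longrightarrow> pXYN K p q i \<nu> > 0 \<Longrightarrow> pX K p i * pYN K p q \<nu> > 0"
proof -
  assume jd: "is_joint_dist K p" and q: "q \<in> Delta N K" and \<nu>: "\<nu> \<in> {1..N}" and i: "i \<in> {1..K}"
    and pos: "pXYN K p q i \<nu> > 0"
  obtain k where k: "k \<in> {1..K}" "q \<nu> k * p i k > 0"
  proof -
    { assume "\<forall>k\<in>{1..K}. \<not> q \<nu> k * p i k > 0"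
      then have "pXYN K p q i \<nu> \<le> 0" unfolding pXYN_def by (intro sum_nonpos) (auto simp: not_less)
      with pos have False by simp }
    then show ?thesis using that by blast
  qed
  have qk: "q \<nu> k \<ge> 0" "p i k \<ge> 0" using k q jd i \<nu> by (auto simp: Delta_nonneg jd_nonneg)
  then have "q \<nu> k > 0" "p i k > 0" using k(2) by (auto simp: zero_less_mult_iff)
  moreover have "pY K p k > 0" using pY_ge[OF jd i k(1)] \<open>p i k > 0\<close> by simp
  ultimately have "pYN K p q \<nu> > 0" using pYN_pos[OF jd q \<nu> k(1)] by simp
  moreover have "pX K p i > 0" using pX_ge[OF jd i k(1)] \<open>p i k > 0\<close> by simp
  ultimately show ?thesis by simp
qed

lemma MI_Y_alt: "is_joint_dist K p \<Longrightarrow>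
   MI_Y_YN N K p q = (\<Sum>k=1..K. \<Sum>\<nu>=1..N. pY K p k * xlog (q \<nu> k) (pYN K p q \<nu>))"
  unfolding MI_Y_YN_def
  by (intro sum.cong refl) (metis mult.commute pY_nonneg xlog_scale)

lemma data_processing:
  assumes jd: "is_joint_dist K p" and q: "q \<in> Delta N K"
  shows "MI_X_YN N K p q \<le> MI_Y_YN N K p q"
proof -
  have "MI_X_YN N K p q \<le> (\<Sum>i=1..K. \<Sum>\<nu>=1..N. \<Sum>k=1..K. xlog (q \<nu> k * p i k) (p i k * pYN K p q \<nu>))"
    unfolding MI_X_YN_def
  proof (intro sum_mono)
    fix i \<nu> assume i: "i \<in> {1..K}" and \<nu>: "\<nu> \<in> {1..N}"
    have e: "pX K p i * pYN K p q \<nu> = (\<Sum>k=1..K. p i k * pYN K p q \<nu>)"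
      unfolding pX_def by (simp add: sum_distrib_right)
    show "xlog (pXYN K p q i \<nu>) (pX K p i * pYN K p q \<nu>)
          \<le> (\<Sum>k=1..K. xlog (q \<nu> k * p i k) (p i k * pYN K p q \<nu>))"
      unfolding e pXYN_def
    proof (rule xlog_sum)
      fix k assume k: "k \<in> {1..K}"
      show "q \<nu> k * p i k \<ge> 0" using k i \<nu> jd q by (simp add: Delta_nonneg jd_nonneg)
      show "p i k * pYN K p q \<nu> \<ge> 0" using k i \<nu> jd q by (simp add: pYN_nonneg jd_nonneg)
      assume "q \<nu> k * p i k > 0"
      moreover have "q \<nu> k \<ge> 0" "p i k \<ge> 0" using k i \<nu> jd q by (auto simp: Delta_nonneg jd_nonneg)
      ultimately have "q \<nu> k > 0" "p i k > 0" by (auto simp: zero_less_mult_iff)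
      moreover have "pY K p k > 0" using pY_ge[OF jd i k] \<open>p i k > 0\<close> by simp
      ultimately show "p i k * pYN K p q \<nu> > 0" using pYN_pos[OF jd q \<nu> k] by simp
    qed simp
  qed
  also have "\<dots> = (\<Sum>i=1..K. \<Sum>\<nu>=1..N. \<Sum>k=1..K. p i k * xlog (q \<nu> k) (pYN K p q \<nu>))"
    by (intro sum.cong refl) (metis mult.commute jd_nonneg[OF jd] xlog_scale)
  also have "\<dots> = (\<Sum>k=1..K. \<Sum>\<nu>=1..N. \<Sum>i=1..K. p i k * xlog (q \<nu> k) (pYN K p q \<nu>))"
    apply (subst sum.swap) apply (subst (2) sum.swap) apply (subst sum.swap) ..
  also have "\<dots> = MI_Y_YN N K p q"
    unfolding MI_Y_alt[OF jd] pY_def by (simp add: sum_distrib_right)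
  finally show ?thesis .
qed


lemma xlog_shift: "q \<ge> 0 \<Longrightarrow> N > 0 \<Longrightarrow> xlog q (1 / N) = xlog q 1 + q * ln N"
  by (cases "q = 0") (auto simp: xlog_def ln_mult distrib_left)

lemma term_diff:
  fixes y q r N :: real
  assumes "y \<ge> 0" "q \<ge> 0" "y > 0 \<Longrightarrow> q > 0 \<Longrightarrow> r > 0" "N > 0"
  shows "y * (xlog q (1 / N) - xlog q r) = y * q * ln (N * r)"
proof (cases "y = 0 \<or> q = 0")
  case True then show ?thesis by (auto simp: xlog_def)
next
  case False
  then have "y > 0" "q > 0" "r > 0" using assms by auto
  then show ?thesis using assms by (simp add: xlog_def ln_mult ln_div algebra_simps)
qed

lemma xlog_inv: "r \<ge> 0 \<Longrightarrow> N > 0 \<Longrightarrow> xlog r (1 / N) = r * ln (N * r)"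
  by (cases "r = 0") (auto simp: xlog_def mult.commute)

lemma entropy_bound:
  assumes jd: "is_joint_dist K p" and q: "q \<in> Delta N K" and N: "N > 0"
  shows "MI_Y_YN N K p q \<le> ln (real N) - CondH_YN_Y N K p q"
proof -
  have RN: "real N > 0" using N by simp
  have "ln (real N) - CondH_YN_Y N K p q
      = (\<Sum>k=1..K. pY K p k * (\<Sum>\<nu>=1..N. xlog (q \<nu> k) 1)) + (\<Sum>k=1..K. pY K p k) * ln (real N)"
    unfolding CondH_YN_Y_def using pY_sum[OF jd] by simp
  also have "\<dots> = (\<Sum>k=1..K. \<Sum>\<nu>=1..N. pY K p k * xlog (q \<nu> k) (1 / real N))"
  proof -
    have "\<And>k. k \<in> {1..K} \<Longrightarrow> (\<Sum>\<nu>=1..N. pY K p k * xlog (q \<nu> k) (1 / real N))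
          = pY K p k * (\<Sum>\<nu>=1..N. xlog (q \<nu> k) 1) + pY K p k * ln (real N)"
    proof -
      fix k assume k: "k \<in> {1..K}"
      have "(\<Sum>\<nu>=1..N. pY K p k * xlog (q \<nu> k) (1 / real N))
          = (\<Sum>\<nu>=1..N. pY K p k * xlog (q \<nu> k) 1 + pY K p k * ln (real N) * q \<nu> k)"
        using Delta_nonneg[OF q _ k] RN by (intro sum.cong refl) (simp add: xlog_shift algebra_simps)
      also have "\<dots> = pY K p k * (\<Sum>\<nu>=1..N. xlog (q \<nu> k) 1) + pY K p k * ln (real N)"
        using Delta_sum[OF q k] by (simp add: sum.distrib sum_distrib_left[symmetric])
      finally show "(\<Sum>\<nu>=1..N. pY K p k * xlog (q \<nu> k) (1 / real N))
          = pY K p k * (\<Sum>\<nu>=1..N. xlog (q \<nu> k) 1) + pY K p k * ln (real N)" .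
    qed
    then show ?thesis by (simp add: sum.distrib sum_distrib_right)
  qed
  finally have e1: "ln (real N) - CondH_YN_Y N K p q = (\<Sum>k=1..K. \<Sum>\<nu>=1..N. pY K p k * xlog (q \<nu> k) (1 / real N))" .
  have "ln (real N) - CondH_YN_Y N K p q - MI_Y_YN N K p q
      = (\<Sum>k=1..K. \<Sum>\<nu>=1..N. pY K p k * (xlog (q \<nu> k) (1 / real N) - xlog (q \<nu> k) (pYN K p q \<nu>)))"
    unfolding e1 MI_Y_alt[OF jd] by (simp add: sum_subtractf[symmetric] algebra_simps)
  also have "\<dots> = (\<Sum>k=1..K. \<Sum>\<nu>=1..N. pY K p k * q \<nu> k * ln (real N * pYN K p q \<nu>))"
    by (intro sum.cong refl term_diff)
       (auto simp: pY_nonneg[OF jd] Delta_nonneg[OF q] pYN_pos[OF jd q] RN)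
  also have "\<dots> = (\<Sum>\<nu>=1..N. \<Sum>k=1..K. pY K p k * q \<nu> k * ln (real N * pYN K p q \<nu>))"
    by (rule sum.swap)
  also have "\<dots> = (\<Sum>\<nu>=1..N. xlog (pYN K p q \<nu>) (1 / real N))"
  proof (intro sum.cong refl)
    fix \<nu> assume \<nu>: "\<nu> \<in> {1..N}"
    have "xlog (pYN K p q \<nu>) (1 / real N) = pYN K p q \<nu> * ln (real N * pYN K p q \<nu>)"
      using xlog_inv[OF pYN_nonneg[OF jd q \<nu>] RN] .
    also have "\<dots> = (\<Sum>k=1..K. pY K p k * q \<nu> k * ln (real N * pYN K p q \<nu>))"
      unfolding pYN_def[of K p q \<nu>] by (simp add: sum_distrib_right mult.commute)
    finally show "(\<Sum>k=1..K. pY K p k * q \<nu> k * ln (real N * pYN K p q \<nu>)) = xlog (pYN K p q \<nu>) (1 / real N)" by simp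
  qed
  also have "\<dots> \<ge> xlog (\<Sum>\<nu>=1..N. pYN K p q \<nu>) (\<Sum>\<nu>=1..N. 1 / real N)"
    by (rule xlog_sum) (auto simp: pYN_nonneg[OF jd q] RN)
  moreover have "(\<Sum>\<nu>=1..N. pYN K p q \<nu>) = 1"
  proof -
    have "(\<Sum>\<nu>=1..N. pYN K p q \<nu>) = (\<Sum>k=1..K. pY K p k * (\<Sum>\<nu>=1..N. q \<nu> k))"
      unfolding pYN_def by (subst sum.swap) (simp add: sum_distrib_left mult.commute)
    also have "\<dots> = (\<Sum>k=1..K. pY K p k)" using Delta_sum[OF q] by simp
    finally show ?thesis using pY_sum[OF jd] by simp
  qed
  moreover have "(\<Sum>\<nu>=1..N. 1 / real N) = 1" using RN by simp
  ultimately show ?thesis by (simp add: xlog_def)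
qed


definition qmix :: "nat \<Rightarrow> real \<Rightarrow> (nat \<Rightarrow> nat \<Rightarrow> real) \<Rightarrow> nat \<Rightarrow> nat \<Rightarrow> real" where
  "qmix N t q = (\<lambda>\<nu> k. (1-t) * q \<nu> k + t * (1 / real N))"

lemma qmix_Delta:
  assumes "q \<in> Delta N K" "N > 0" "0 \<le> t" "t \<le> 1"
  shows "qmix N t q \<in> Delta N K"
  using assms unfolding Delta_def qmix_def
  by (auto simp: sum.distrib sum_distrib_left[symmetric] intro!: add_nonneg_nonneg mult_nonneg_nonneg)

lemma pYN_qmix:
  assumes jd: "is_joint_dist K p"
  shows "pYN K p (qmix N t q) \<nu> = (1-t) * pYN K p q \<nu> + t * (1 / real N)"
proof -
  have "pYN K p (qmix N t q) \<nu> = (\<Sum>k=1..K. (1-t) * (q \<nu> k * pY K p k) + (t / real N) * pY K p k)"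
    unfolding pYN_def qmix_def by (intro sum.cong refl) (simp add: algebra_simps)
  also have "\<dots> = (1-t) * pYN K p q \<nu> + (t / real N) * (\<Sum>k=1..K. pY K p k)"
    unfolding pYN_def by (simp add: sum.distrib sum_distrib_left)
  finally show ?thesis using pY_sum[OF jd] by simp
qed

lemma pXYN_qmix:
  shows "pXYN K p (qmix N t q) i \<nu> = (1-t) * pXYN K p q i \<nu> + t * (pX K p i / real N)"
proof -
  have "pXYN K p (qmix N t q) i \<nu> = (\<Sum>k=1..K. (1-t) * (q \<nu> k * p i k) + (t / real N) * p i k)"
    unfolding pXYN_def qmix_def by (intro sum.cong refl) (simp add: algebra_simps)
  also have "\<dots> = (1-t) * pXYN K p q i \<nu> + (t / real N) * pX K p i"
    unfolding pXYN_def pX_def by (simp add: sum.distrib sum_distrib_left)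
  finally show ?thesis by simp
qed

lemma MI_Y_mix:
  assumes jd: "is_joint_dist K p" and q: "q \<in> Delta N K" and N: "N > 0" and t: "0 \<le> t" "t \<le> 1"
  shows "MI_Y_YN N K p (qmix N t q) \<le> (1-t) * MI_Y_YN N K p q"
proof -
  have "MI_Y_YN N K p (qmix N t q) = (\<Sum>k=1..K. \<Sum>\<nu>=1..N.
      xlog ((1-t) * (q \<nu> k * pY K p k) + t * (pY K p k / real N))
           ((1-t) * (pY K p k * pYN K p q \<nu>) + t * (pY K p k / real N)))"
    unfolding MI_Y_YN_def pYN_qmix[OF jd]
    by (intro sum.cong refl) (simp add: qmix_def algebra_simps)
  also have "\<dots> \<le> (\<Sum>k=1..K. \<Sum>\<nu>=1..N.
      (1-t) * xlog (q \<nu> k * pY K p k) (pY K p k * pYN K p q \<nu>) + t * xlog (pY K p k / real N) (pY K p k / real N))"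
  proof (intro sum_mono xlog_convex)
    fix k \<nu> assume k: "k \<in> {1..K}" and \<nu>: "\<nu> \<in> {1..N}"
    show "q \<nu> k * pY K p k \<ge> 0" "pY K p k * pYN K p q \<nu> \<ge> 0" "pY K p k / real N \<ge> 0"
      using k \<nu> N by (auto simp: Delta_nonneg[OF q] pY_nonneg[OF jd] pYN_nonneg[OF jd q])
    show "pY K p k * pYN K p q \<nu> > 0" if "q \<nu> k * pY K p k > 0"
    proof -
      have "q \<nu> k > 0" "pY K p k > 0" using that k \<nu> Delta_nonneg[OF q \<nu> k] pY_nonneg[OF jd k]
        by (auto simp: zero_less_mult_iff)
      then show ?thesis using pYN_pos[OF jd q \<nu> k] by simp
    qed
  qed (use t N in \<open>auto simp: pY_nonneg[OF jd]\<close>)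
  also have "\<dots> = (1-t) * MI_Y_YN N K p q"
    unfolding MI_Y_YN_def by (simp add: xlog_self sum_distrib_left)
  finally show ?thesis .
qed

lemma CondH_mix:
  assumes jd: "is_joint_dist K p" and q: "q \<in> Delta N K" and N: "N > 0" and t: "0 \<le> t" "t \<le> 1"
  shows "(1-t) * CondH_YN_Y N K p q + t * ln (real N) \<le> CondH_YN_Y N K p (qmix N t q)"
proof -
  have RN: "real N > 0" using N by simp
  have "(\<Sum>k=1..K. pY K p k * (\<Sum>\<nu>=1..N. xlog (qmix N t q \<nu> k) 1))
      \<le> (\<Sum>k=1..K. pY K p k * ((1-t) * (\<Sum>\<nu>=1..N. xlog (q \<nu> k) 1) - t * ln (real N)))"
  proof (intro sum_mono mult_left_mono)
    fix k assume k: "k \<in> {1..K}"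
    show "pY K p k \<ge> 0" using pY_nonneg[OF jd k] .
    have "(\<Sum>\<nu>=1..N. xlog (qmix N t q \<nu> k) 1)
        \<le> (\<Sum>\<nu>=1..N. (1-t) * xlog (q \<nu> k) 1 + t * xlog (1 / real N) 1)"
    proof (intro sum_mono)
      fix \<nu> assume \<nu>: "\<nu> \<in> {1..N}"
      have "xlog ((1-t) * q \<nu> k + t * (1 / real N)) ((1-t) * 1 + t * 1)
          \<le> (1-t) * xlog (q \<nu> k) 1 + t * xlog (1 / real N) 1"
        by (rule xlog_convex) (use t Delta_nonneg[OF q \<nu> k] in auto)
      then show "xlog (qmix N t q \<nu> k) 1 \<le> (1-t) * xlog (q \<nu> k) 1 + t * xlog (1 / real N) 1"
        by (simp add: qmix_def)
    qed
    also have "\<dots> = (1-t) * (\<Sum>\<nu>=1..N. xlog (q \<nu> k) 1) - t * ln (real N)"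
    proof -
      have x: "xlog (1 / real N) 1 = - ln (real N) / real N" using RN by (simp add: xlog_def ln_div)
      show ?thesis unfolding x using RN by (simp add: sum_subtractf sum_distrib_left[symmetric])
    qed
    finally show "(\<Sum>\<nu>=1..N. xlog (qmix N t q \<nu> k) 1) \<le> (1-t) * (\<Sum>\<nu>=1..N. xlog (q \<nu> k) 1) - t * ln (real N)" .
  qed
  also have "\<dots> = (1-t) * (\<Sum>k=1..K. pY K p k * (\<Sum>\<nu>=1..N. xlog (q \<nu> k) 1)) - t * ln (real N)"
  proof -
    have "(\<Sum>k=1..K. pY K p k * ((1-t) * (\<Sum>\<nu>=1..N. xlog (q \<nu> k) 1) - t * ln (real N)))
       = (\<Sum>k=1..K. (1-t) * (pY K p k * (\<Sum>\<nu>=1..N. xlog (q \<nu> k) 1)) - (t * ln (real N)) * pY K p k)"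
      by (intro sum.cong refl) (simp add: algebra_simps)
    also have "\<dots> = (1-t) * (\<Sum>k=1..K. pY K p k * (\<Sum>\<nu>=1..N. xlog (q \<nu> k) 1)) - (t * ln (real N)) * (\<Sum>k=1..K. pY K p k)"
      by (simp only: sum_subtractf sum_distrib_left)
    finally show ?thesis using pY_sum[OF jd] by simp
  qed
  finally show ?thesis unfolding CondH_YN_Y_def by simp
qed

lemma MI_X_lim:
  assumes jd: "is_joint_dist K p" and q: "q \<in> Delta N K" and N: "N > 0"
  shows "((\<lambda>t. MI_X_YN N K p (qmix N t q)) \<longlongrightarrow> MI_X_YN N K p q) (at_right 0)"
  unfolding MI_X_YN_def
proof (intro tendsto_sum)
  fix i \<nu> assume i: "i \<in> {1..K}" and \<nu>: "\<nu> \<in> {1..N}"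
  have "((\<lambda>t. xlog ((1-t) * pXYN K p q i \<nu> + t * (pX K p i / real N))
           ((1-t) * (pX K p i * pYN K p q \<nu>) + t * (pX K p i / real N)))
        \<longlongrightarrow> xlog (pXYN K p q i \<nu>) (pX K p i * pYN K p q \<nu>)) (at_right 0)"
    by (rule xlog_cont)
       (use i \<nu> pXYN_pos[OF jd q \<nu> i] in \<open>auto simp: pXYN_nonneg[OF jd q] pX_nonneg[OF jd] pYN_nonneg[OF jd q]\<close>)
  then show "((\<lambda>t. xlog (pXYN K p (qmix N t q) i \<nu>) (pX K p i * pYN K p (qmix N t q) \<nu>))
        \<longlongrightarrow> xlog (pXYN K p q i \<nu>) (pX K p i * pYN K p q \<nu>)) (at_right 0)"
    by (simp add: pXYN_qmix pYN_qmix[OF jd] algebra_simps)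
qed


lemma improve:
  assumes jd: "is_joint_dist K p" and I0: "I0 > 0" and q: "q \<in> Delta N K"
    and gt: "MI_X_YN N K p q > I0"
  shows "\<exists>q'\<in>Delta N K. MI_X_YN N K p q' \<ge> I0 \<and> MI_Y_YN N K p q' < MI_Y_YN N K p q
          \<and> CondH_YN_Y N K p q' > CondH_YN_Y N K p q"
proof -
  have K: "K > 0"
  proof (rule ccontr)
    assume "\<not> K > 0" then have "K = 0" by simp
    with jd show False by (simp add: is_joint_dist_def)
  qed
  have N: "N > 0"
  proof (rule ccontr)
    assume "\<not> N > 0" then have "N = 0" by simp
    with Delta_sum[OF q, of 1] K show False by simp
  qed
  have "eventually (\<lambda>t. MI_X_YN N K p (qmix N t q) > I0) (at_right 0)"
    using order_tendstoD(1)[OF MI_X_lim[OF jd q N] gt] .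
  moreover have "eventually (\<lambda>t. t \<in> {0<..<1::real}) (at_right 0)"
    by (rule eventually_at_right_real) auto
  ultimately have "eventually (\<lambda>t. MI_X_YN N K p (qmix N t q) > I0 \<and> t \<in> {0<..<1::real}) (at_right 0)"
    by (rule eventually_conj)
  then obtain t where t: "MI_X_YN N K p (qmix N t q) > I0" "0 < t" "t < 1"
    using eventually_happens[of _ "at_right (0::real)"] by auto
  define q' where "q' = qmix N t q"
  have q': "q' \<in> Delta N K" unfolding q'_def using t q N by (intro qmix_Delta) auto
  have MIY: "MI_Y_YN N K p q > 0"
    using data_processing[OF jd q] gt I0 by simp
  have "MI_Y_YN N K p q' \<le> (1-t) * MI_Y_YN N K p q"
    unfolding q'_def using MI_Y_mix[OF jd q N] t by simp
  also have "\<dots> < MI_Y_YN N K p q" using MIY t by (simp add: algebra_simps)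
  finally have 1: "MI_Y_YN N K p q' < MI_Y_YN N K p q" .
  have H: "ln (real N) - CondH_YN_Y N K p q > 0"
    using entropy_bound[OF jd q N] MIY by simp
  have "CondH_YN_Y N K p q < (1-t) * CondH_YN_Y N K p q + t * ln (real N)"
  proof -
    have "t * (ln (real N) - CondH_YN_Y N K p q) > 0" using H t by simp
    then show ?thesis by (simp add: algebra_simps)
  qed
  also have "\<dots> \<le> CondH_YN_Y N K p q'"
    unfolding q'_def using CondH_mix[OF jd q N] t by simp
  finally have 2: "CondH_YN_Y N K p q' > CondH_YN_Y N K p q" .
  have 3: "MI_X_YN N K p q' \<ge> I0" using t(1) unfolding q'_def by simp
  show ?thesis using q' 1 2 3 by blast
qed

theorem mainTheorem1:
  fixes N K :: nat and p :: "nat \<Rightarrow> nat \<Rightarrow> real" and I0 :: real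
  assumes "is_joint_dist K p"
    and "I0 > 0"
  shows "(\<forall>qs. is_solution N K p I0 (\<lambda>q. - MI_Y_YN N K p q) qs \<longrightarrow> MI_X_YN N K p qs = I0)
       \<and> (\<forall>qs. is_solution N K p I0 (\<lambda>q. CondH_YN_Y N K p q) qs \<longrightarrow> MI_X_YN N K p qs = I0)"
proof safe
  fix qs assume s: "is_solution N K p I0 (\<lambda>q. - MI_Y_YN N K p q) qs"
  show "MI_X_YN N K p qs = I0"
  proof (rule ccontr)
    assume "MI_X_YN N K p qs \<noteq> I0"
    then have "MI_X_YN N K p qs > I0" using s by (auto simp: is_solution_def)
    moreover have "qs \<in> Delta N K" using s by (simp add: is_solution_def)
    ultimately obtain q' where "q' \<in> Delta N K" "MI_X_YN N K p q' \<ge> I0" "MI_Y_YN N K p q' < MI_Y_YN N K p qs"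
      using improve[OF assms] by blast
    then show False using s by (force simp: is_solution_def)
  qed
next
  fix qs assume s: "is_solution N K p I0 (\<lambda>q. CondH_YN_Y N K p q) qs"
  show "MI_X_YN N K p qs = I0"
  proof (rule ccontr)
    assume "MI_X_YN N K p qs \<noteq> I0"
    then have "MI_X_YN N K p qs > I0" using s by (auto simp: is_solution_def)
    moreover have "qs \<in> Delta N K" using s by (simp add: is_solution_def)
    ultimately obtain q' where "q' \<in> Delta N K" "MI_X_YN N K p q' \<ge> I0" "CondH_YN_Y N K p q' > CondH_YN_Y N K p qs"
      using improve[OF assms] by blast
    then show False using s by (force simp: is_solution_def)
  qed
qed

end
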